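(* Let $V$ be a nonzero finite-dimensional real vector space and let $\mathcal{U}\subset V^*$ be a $\bigvee$-system with multiplicities $h_\alpha$ ($\alpha\in\mathcal{U}$), constant $h_{\mathcal{U}}$ and associated non-degenerate metric $(\cdot,\cdot)$ on $V$, i.e. $\sum_{\alpha\in\mathcal{U}}h_\alpha\,\alpha(x)\alpha(y)=h_{\mathcal{U}}\,(x,y)$ for all $x,y\in V$. Let $\vartheta_s$ be an invariant small orbit of $\mathcal{U}$ with multiplicities $h_w$ ($w\in\vartheta_s$) and constant $h_s$. Let $V^{ext}=V\oplus V^\perp$ with $V^\perp=\mathrm{span}\{n^\vee\}$, equipped with the non-degenerate metric $(z_o+z^\perp,z_o'+z'^\perp)^{ext}=(z_o,z_o')+(z^\perp,z'^\perp)^{ext}$ ($z_o,z_o'\in V$, $z^\perp,z'^\perp\in V^\perp$), where $(n^\vee,n^\vee)^{ext}\neq 0$ is a given number, and let $n\in (V^{ext})^*$ be the covector $n(z)=(n^\vee,z)^{ext}$. Let $\mathcal{U}^{ext}=\mathcal{U}\cup\{\pm(w+n): w\in\vartheta_s\}\cup\{\pm n\}$, where the covectors $\pm(w+n)$ carry multiplicity $h_w$ and $\pm n$ carry multiplicity $h_n$. Then there exists a constant $h_{\mathcal{U}^{ext}}$ such that $$h_{\mathcal{U}^{ext}}\,(x,y)^{ext}=\sum_{\alpha\in\mathcal{U}^{ext}}h_\alpha\,\alpha(x)\alpha(y)\quad\text{for all }x,y\in V^{ext}$$ if and only if $$h_{\mathcal{U}}+2h_s=2\Big\{h_n+\sum_{w\in\vartheta_s}h_w\Big\}(n^\vee,n^\vee)^{ext}.$$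 In that case $h_{\mathcal{U}^{ext}}=h_{\mathcal{U}}+2h_s$.
   Context: Setting: $V$ is a real vector space and $\mathcal{U}\subset V^*$ a finite set of covectors spanning $V^*$, each $\alpha\in\mathcal{U}$ carrying a real number $h_\alpha$ (its multiplicity, possibly negative). A metric $(\cdot,\cdot)$ on $V$ is defined by $\sum_{\alpha\in\mathcal{U}}h_\alpha\alpha(x)\alpha(y)=h_{\mathcal{U}}(x,y)$ for a fixed nonzero constant $h_{\mathcal{U}}$, and is assumed non-degenerate (not necessarily positive definite). It gives an isomorphism $V\to V^*$; write $\alpha^\vee\in V$ for the vector corresponding to $\alpha\in V^*$. $\mathcal{U}$ is a $\bigvee$-system if for each $\alpha\in\mathcal{U}$ and each two-plane $\Pi\subset V^*$ containing $\alpha$ one has $\sum_{\beta\in\Pi\cap\mathcal{U}}h_\beta\,\beta(\alpha^\vee)\beta^\vee=\lambda\,\alpha^\vee$ for some scalar $\lambda$ (depending on $\Pi$ and $\alpha$). A small orbit of $\mathcal{U}$ is a finite set $\vartheta_s\subset V^*$ such that $w_1-w_2\in\mathcal{U}$ for all distinct $w_1,w_2\in\vartheta_s$; it is an invariant small orbit if it comes with multiplicities $h_w$ ($w\in\vartheta_s$) such that $\sum_{w\in\vartheta_s}h_w w(z)^2=h_s(z,z)$ for some constant $h_s$ and $\sum_{w\in\vartheta_s}h_w w(z)=0$, for all $z\in V$. Covectors on $V$ (elements of $\mathcal{U}$ and $\vartheta_s$) are regarded as covectors on $V^{ext}=V\oplus V^\perp$ by letting them vanish on $V^\perp$. *)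

theory Defs
  imports "HOL-Analysis.Analysis"
begin

text \<open>V is modelled by a type 'a :: euclidean_space (finite-dimensional, nonzero real
vector space); its own inner product is irrelevant.\<close>

definition nondegenerate :: "('a::zero \<Rightarrow> 'a \<Rightarrow> real) \<Rightarrow> bool" where
  "nondegenerate B \<longleftrightarrow> (\<forall>x. (\<forall>y. B x y = 0) \<longrightarrow> x = 0)"

definition dual_vec :: "('a \<Rightarrow> 'a \<Rightarrow> real) \<Rightarrow> ('a \<Rightarrow> real) \<Rightarrow> 'a" where
  "dual_vec B \<alpha> = (THE v. \<forall>x. B v x = \<alpha> x)"

definition spans_dual :: "('a::real_vector \<Rightarrow> real) set \<Rightarrow> bool" where
  "spans_dual U \<longleftrightarrow> (\<forall>f. linear f \<longrightarrow> (\<exists>c. \<forall>x. f x = (\<Sum>\<alpha>\<in>U. c \<alpha> * \<alpha> x)))"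

definition lin_indep2 :: "('a::type \<Rightarrow> real) \<Rightarrow> ('a \<Rightarrow> real) \<Rightarrow> bool" where
  "lin_indep2 \<alpha> \<gamma> \<longleftrightarrow> (\<forall>a b. (\<forall>x. a * \<alpha> x + b * \<gamma> x = 0) \<longrightarrow> a = 0 \<and> b = 0)"

text \<open>Every two-plane containing alpha is span{alpha, gamma} for such a gamma.\<close>
definition in_plane :: "('a \<Rightarrow> real) \<Rightarrow> ('a \<Rightarrow> real) \<Rightarrow> ('a \<Rightarrow> real) \<Rightarrow> bool" where
  "in_plane \<alpha> \<gamma> \<beta> \<longleftrightarrow> (\<exists>a b. \<beta> = (\<lambda>x. a * \<alpha> x + b * \<gamma> x))"

definition vee_system ::
  "('a::euclidean_space \<Rightarrow> real) set \<Rightarrow> (('a \<Rightarrow> real) \<Rightarrow> real) \<Rightarrow> real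
     \<Rightarrow> ('a \<Rightarrow> 'a \<Rightarrow> real) \<Rightarrow> bool" where
  "vee_system U h hU B \<longleftrightarrow>
     finite U \<and> (\<forall>\<alpha>\<in>U. linear \<alpha>) \<and> spans_dual U \<and> hU \<noteq> 0 \<and>
     (\<forall>x y. (\<Sum>\<alpha>\<in>U. h \<alpha> * \<alpha> x * \<alpha> y) = hU * B x y) \<and>
     nondegenerate B \<and>
     (\<forall>\<alpha>\<in>U. \<forall>\<gamma>. linear \<gamma> \<and> lin_indep2 \<alpha> \<gamma> \<longrightarrow>
        (\<exists>l. (\<Sum>\<beta>\<in>{\<beta>\<in>U. in_plane \<alpha> \<gamma> \<beta>}.
                 (h \<beta> * \<beta> (dual_vec B \<alpha>)) *\<^sub>R dual_vec B \<beta>) = l *\<^sub>R dual_vec B \<alpha>))"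

definition small_orbit :: "('a \<Rightarrow> real) set \<Rightarrow> ('a \<Rightarrow> real) set \<Rightarrow> bool" where
  "small_orbit U \<theta> \<longleftrightarrow> finite \<theta> \<and>
     (\<forall>w1\<in>\<theta>. \<forall>w2\<in>\<theta>. w1 \<noteq> w2 \<longrightarrow> (\<lambda>x. w1 x - w2 x) \<in> U)"

definition invariant_small_orbit ::
  "('a::real_vector \<Rightarrow> real) set \<Rightarrow> ('a \<Rightarrow> 'a \<Rightarrow> real) \<Rightarrow> ('a \<Rightarrow> real) set
     \<Rightarrow> (('a \<Rightarrow> real) \<Rightarrow> real) \<Rightarrow> real \<Rightarrow> bool" where
  "invariant_small_orbit U B \<theta> hw hs \<longleftrightarrow> small_orbit U \<theta> \<and> (\<forall>w\<in>\<theta>. linear w) \<and>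
     (\<forall>z. (\<Sum>w\<in>\<theta>. hw w * (w z)\<^sup>2) = hs * B z z) \<and>
     (\<forall>z. (\<Sum>w\<in>\<theta>. hw w * w z) = 0)"

text \<open>V^ext = V \<oplus> span{n-check} is modelled as 'a \<times> real, (z, t) meaning z + t n-check.
c is the number (n-check, n-check)^ext.\<close>
definition ext_metric :: "('a \<Rightarrow> 'a \<Rightarrow> real) \<Rightarrow> real \<Rightarrow> 'a \<times> real \<Rightarrow> 'a \<times> real \<Rightarrow> real" where
  "ext_metric B c p q = B (fst p) (fst q) + snd p * snd q * c"

definition nvee :: "'a::zero \<times> real" where "nvee = (0, 1)"

definition ncov :: "('a::zero \<Rightarrow> 'a \<Rightarrow> real) \<Rightarrow> real \<Rightarrow> 'a \<times> real \<Rightarrow> real" where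
  "ncov B c p = ext_metric B c nvee p"

definition ext_cov :: "('a \<Rightarrow> real) \<Rightarrow> 'a \<times> real \<Rightarrow> real" where
  "ext_cov \<alpha> p = \<alpha> (fst p)"

text \<open>The sum over U^ext = U \<union> {\<plusminus>(w+n)} \<union> {\<plusminus>n} of h_alpha alpha(x) alpha(y),
counted as a multiset (each listed covector once).\<close>
definition ext_sum ::
  "('a::zero \<Rightarrow> real) set \<Rightarrow> (('a \<Rightarrow> real) \<Rightarrow> real) \<Rightarrow> ('a \<Rightarrow> 'a \<Rightarrow> real) \<Rightarrow> real
    \<Rightarrow> ('a \<Rightarrow> real) set \<Rightarrow> (('a \<Rightarrow> real) \<Rightarrow> real) \<Rightarrow> real
    \<Rightarrow> 'a \<times> real \<Rightarrow> 'a \<times> real \<Rightarrow> real" where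
  "ext_sum U h B c \<theta> hw hn x y =
     (\<Sum>\<alpha>\<in>U. h \<alpha> * ext_cov \<alpha> x * ext_cov \<alpha> y)
   + (\<Sum>w\<in>\<theta>. hw w * (ext_cov w x + ncov B c x) * (ext_cov w y + ncov B c y)
             + hw w * (- (ext_cov w x + ncov B c x)) * (- (ext_cov w y + ncov B c y)))
   + (hn * ncov B c x * ncov B c y + hn * (- ncov B c x) * (- ncov B c y))"

end

theory Submission
  imports Defs
begin

theorem lemma2p2:
  fixes U \<theta> :: "('a::euclidean_space \<Rightarrow> real) set"
    and h hw :: "('a \<Rightarrow> real) \<Rightarrow> real"
    and hU hs hn c :: real
    and B :: "'a \<Rightarrow> 'a \<Rightarrow> real"
  assumes "vee_system U h hU B"
    and "invariant_small_orbit U B \<theta> hw hs"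
    and "c \<noteq> 0"
  shows "((\<exists>hext. \<forall>x y. hext * ext_metric B c x y = ext_sum U h B c \<theta> hw hn x y)
            \<longleftrightarrow> hU + 2 * hs = 2 * (hn + (\<Sum>w\<in>\<theta>. hw w)) * c)
         \<and> (\<forall>hext. (\<forall>x y. hext * ext_metric B c x y = ext_sum U h B c \<theta> hw hn x y)
                   \<longrightarrow> hext = hU + 2 * hs)"
proof -
  have linU: "\<And>\<alpha>. \<alpha> \<in> U \<Longrightarrow> linear \<alpha>" and G: "\<And>x y. (\<Sum>\<alpha>\<in>U. h \<alpha> * \<alpha> x * \<alpha> y) = hU * B x y"
    and hU0: "hU \<noteq> 0" and nd: "nondegenerate B"
    using assms(1) unfolding vee_system_def by auto
  have linT: "\<And>w. w \<in> \<theta> \<Longrightarrow> linear w" and Q: "\<And>z. (\<Sum>w\<in>\<theta>. hw w * (w z)\<^sup>2) = hs * B z z"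
    and L: "\<And>z. (\<Sum>w\<in>\<theta>. hw w * w z) = 0"
    using assms(2) unfolding invariant_small_orbit_def by auto
  have B0: "B 0 z = 0" for z
  proof -
    have "hU * B 0 z = (\<Sum>\<alpha>\<in>U. h \<alpha> * \<alpha> 0 * \<alpha> z)" using G by simp
    also have "\<dots> = 0" by (rule sum.neutral) (simp add: linU linear_0)
    finally show ?thesis using hU0 by simp
  qed
  have Badd1: "B (z + z') y = B z y + B z' y" for z z' y
  proof -
    have "hU * B (z + z') y = (\<Sum>\<alpha>\<in>U. h \<alpha> * \<alpha> (z + z') * \<alpha> y)" using G by simp
    also have "\<dots> = (\<Sum>\<alpha>\<in>U. h \<alpha> * \<alpha> z * \<alpha> y + h \<alpha> * \<alpha> z' * \<alpha> y)"
      by (rule sum.cong) (simp_all add: linU linear_add algebra_simps)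
    also have "\<dots> = hU * (B z y + B z' y)" by (simp add: sum.distrib G distrib_left)
    finally show ?thesis using hU0 by simp
  qed
  have Badd2: "B y (z + z') = B y z + B y z'" for z z' y
  proof -
    have "hU * B y (z + z') = (\<Sum>\<alpha>\<in>U. h \<alpha> * \<alpha> y * \<alpha> (z + z'))" using G by simp
    also have "\<dots> = (\<Sum>\<alpha>\<in>U. h \<alpha> * \<alpha> y * \<alpha> z + h \<alpha> * \<alpha> y * \<alpha> z')"
      by (rule sum.cong) (simp_all add: linU linear_add algebra_simps)
    also have "\<dots> = hU * (B y z + B y z')" by (simp add: sum.distrib G distrib_left)
    finally show ?thesis using hU0 by simp
  qed
  have Bsym: "B z y = B y z" for z y
  proof -
    have "hU * B z y = hU * B y z" unfolding G[symmetric]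
      by (rule sum.cong) (simp_all add: algebra_simps)
    then show ?thesis using hU0 by simp
  qed
  have P: "(\<Sum>w\<in>\<theta>. hw w * w z * w z') = hs * B z z'" for z z'
  proof -
    have "hs * B (z + z') (z + z') = (\<Sum>w\<in>\<theta>. hw w * (w (z + z'))\<^sup>2)" using Q by simp
    also have "\<dots> = (\<Sum>w\<in>\<theta>. hw w * (w z)\<^sup>2 + hw w * (w z')\<^sup>2 + 2 * (hw w * w z * w z'))"
      by (rule sum.cong) (simp_all add: linT linear_add algebra_simps power2_eq_square)
    also have "\<dots> = hs * B z z + hs * B z' z' + 2 * (\<Sum>w\<in>\<theta>. hw w * w z * w z')"
      by (simp add: sum.distrib Q sum_distrib_left)
    finally show ?thesis using Badd1 Badd2 Bsym by (simp add: algebra_simps)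
  qed
  have E: "ext_sum U h B c \<theta> hw hn (z, t) (z', t') =
      (hU + 2 * hs) * B z z' + 2 * c\<^sup>2 * (hn + (\<Sum>w\<in>\<theta>. hw w)) * t * t'" for z t z' t'
  proof -
    have "(\<Sum>w\<in>\<theta>. hw w * (w z + t * c) * (w z' + t' * c) + hw w * - (w z + t * c) * - (w z' + t' * c))
      = (\<Sum>w\<in>\<theta>. 2 * (hw w * w z * w z') + (2 * t' * c) * (hw w * w z) + (2 * t * c) * (hw w * w z')
          + (2 * t * t' * c\<^sup>2) * hw w)"
      by (rule sum.cong) (simp_all add: algebra_simps power2_eq_square)
    also have "\<dots> = 2 * hs * B z z' + 2 * t * t' * c\<^sup>2 * (\<Sum>w\<in>\<theta>. hw w)"
      by (simp add: sum.distrib sum_distrib_left[symmetric] P L)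
    finally have S: "(\<Sum>w\<in>\<theta>. hw w * (w z + t * c) * (w z' + t' * c) + hw w * - (w z + t * c) * - (w z' + t' * c))
       = 2 * hs * B z z' + 2 * t * t' * c\<^sup>2 * (\<Sum>w\<in>\<theta>. hw w)" .
    show ?thesis
      unfolding ext_sum_def ext_cov_def ncov_def ext_metric_def nvee_def
      using S by (simp add: B0 G) (simp add: algebra_simps power2_eq_square)
  qed
  have M: "ext_metric B c (z, t) (z', t') = B z z' + t * t' * c" for z t z' t'
    by (simp add: ext_metric_def)
  obtain b :: 'a where "b \<in> Basis" by (meson ex_in_conv nonempty_Basis)
  then have b0: "b \<noteq> 0" by (simp add: nonzero_Basis)
  then obtain y0 where y0: "B b y0 \<noteq> 0" using nd unfolding nondegenerate_def by blast
  have uniq: "hext = hU + 2 * hs \<and> hext * c = 2 * c\<^sup>2 * (hn + (\<Sum>w\<in>\<theta>. hw w))"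
    if H: "\<forall>x y. hext * ext_metric B c x y = ext_sum U h B c \<theta> hw hn x y" for hext
  proof
    have "hext * B b y0 = (hU + 2 * hs) * B b y0" using H[rule_format, of "(b,0)" "(y0,0)"]
      by (simp add: M E)
    then show "hext = hU + 2 * hs" using y0 by simp
    show "hext * c = 2 * c\<^sup>2 * (hn + (\<Sum>w\<in>\<theta>. hw w))" using H[rule_format, of "(0,1)" "(0,1)"]
      by (simp add: M E B0)
  qed
  have "(\<exists>hext. \<forall>x y. hext * ext_metric B c x y = ext_sum U h B c \<theta> hw hn x y)
            \<longleftrightarrow> hU + 2 * hs = 2 * (hn + (\<Sum>w\<in>\<theta>. hw w)) * c"
  proof
    assume "\<exists>hext. \<forall>x y. hext * ext_metric B c x y = ext_sum U h B c \<theta> hw hn x y"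
    then obtain hext where "\<forall>x y. hext * ext_metric B c x y = ext_sum U h B c \<theta> hw hn x y" by blast
    from uniq[OF this] have "(hU + 2 * hs) * c = (2 * (hn + (\<Sum>w\<in>\<theta>. hw w)) * c) * c"
      by (metis (no_types, lifting) mult.commute mult.left_commute power2_eq_square)
    then show "hU + 2 * hs = 2 * (hn + (\<Sum>w\<in>\<theta>. hw w)) * c" using assms(3) by simp
  next
    assume A: "hU + 2 * hs = 2 * (hn + (\<Sum>w\<in>\<theta>. hw w)) * c"
    show "\<exists>hext. \<forall>x y. hext * ext_metric B c x y = ext_sum U h B c \<theta> hw hn x y"
    proof (intro exI allI)
      fix x y :: "'a \<times> real"
      obtain z t where x: "x = (z, t)" by fastforce
      obtain z' t' where y: "y = (z', t')" by fastforce
      show "(hU + 2 * hs) * ext_metric B c x y = ext_sum U h B c \<theta> hw hn x y"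
        unfolding x y M E using A by (simp add: algebra_simps power2_eq_square)
    qed
  qed
  then show ?thesis using uniq by blast
qed

end
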